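(* Let $G$ be a network whose underlying graph is a tree (connected, simple, without circuits, at most countable, locally finite), with edges $\mathsf{e}_i$, $i\in\mathbf{E}\subset\mathbb{N}$, parametrized by arc length $x_i\in[0,\ell_i]$ via $\pi_i$, and let $0\in\mathbf{E}$ index a distinguished edge $\mathsf{e}_0$. Consider (BBMG) on $G$ with all $d_i=0$, i.e. $$\partial_tu_i-a_i\partial_i^2\partial_tu_i+b_iu_i\partial_iu_i=0\ \text{on }\mathsf{e}_i,\ t>0;\qquad u_j(t,\mathsf{v}_k)=u_h(t,\mathsf{v}_k),\ \ \sum_{j}\iota_{kj}a_j\partial_ju_j(t,\mathsf{v}_k)=0$$ for all $\mathsf{v}_k\in V_r$, $j,h\in N(\mathsf{v}_k)$, $t\ge0$, where $a_i>0$, $b_i\in\mathbb{R}\setminus\{0\}$. Assume $$\sqrt{\frac{a_i}{a_j}}=\frac{b_i}{b_j}>0\quad\text{for all }\mathsf{v}_k\in V_r\text{ and all }i,j\in N(\mathsf{v}_k),\qquad \sum_{i\in\mathbf{E}}\iota_{ki}b_i=0\quad\text{for all }\mathsf{v}_k\in V_r.$$ Let $c_0>0$ and let the speeds $c_i>0$ be determined by $c_i=\sqrt{a_i/a_j}\,c_j$ for all $\mathsf{v}_k\in V_r$ and $i,j\in N(\mathsf{v}_k)$; let the constants $\tau_i$ be determined by $\tau_0=0$ and $$\frac{\tau_i+\varepsilon_{ki}}{\sqrt{a_i}}=\frac{\tau_j+\varepsilon_{kj}}{\sqrt{a_j}}\quad\text{for all }\mathsf{v}_k\in V_r,\ i,j\in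 N(\mathsf{v}_k),$$ where $\varepsilon_{ki}=\ell_i$ if $\pi_i(\ell_i)=\mathsf{v}_k$ and $\varepsilon_{ki}=0$ if $\pi_i(0)=\mathsf{v}_k$. Then the function $u$ defined on each edge by $u_i(t,x_i)=\varphi_i(x_i-c_it+\tau_i)$, with $$\varphi_i(z)=\frac{6c_i}{b_i}\cdot\frac{1}{1+\cosh\big(z/\sqrt{a_i}\big)},\qquad z\in\mathbb{R},$$ is a strong solution of (BBMG).
   Context: For a vertex $\mathsf{v}$, $N(\mathsf{v})$ is the set of indices of edges incident to $\mathsf{v}$; $V_r$ is the set of vertices of degree $\ge 2$. Incidence numbers: $\iota_{ki}=1$ if $\pi_i(\ell_i)=\mathsf{v}_k$, $\iota_{ki}=-1$ if $\pi_i(0)=\mathsf{v}_k$, $0$ otherwise. $u_i(x_i,t)=u(\pi_i(x_i),t)$, $\partial_i=\partial/\partial x_i$, and values at $\mathsf{v}_k$ mean values at $x_i=\pi_i^{-1}(\mathsf{v}_k)$. No initial conditions and no conditions at degree-one vertices are imposed. A strong solution is a function continuous on $G$ with $u_i\in\mathcal{C}^{1,1}(\mathsf{e}_i\times[0,\infty))$, $\partial_tu_i\in\mathcal{C}^{2,0}(\mathsf{e}_i\times[0,\infty))$, satisfying the system pointwise. The profile $\varphi_i$ is the solitary wave $\frac{6(c-d)}{b}(1+\cosh(\sqrt{(c-d)/(ac)}\,z))^{-1}$ with $a=a_i,b=b_i,c=c_i,d=0$. *)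

theory Defs
  imports "HOL-Analysis.Analysis"
begin

text \<open>A network: vertex set V, edges indexed by E (a set of naturals); edge i is
  parametrised by x_i in [0, l i], with initial vertex src i = pi_i(0) and
  terminal vertex tgt i = pi_i(l i).\<close>

definition incident :: "nat set \<Rightarrow> (nat \<Rightarrow> 'v) \<Rightarrow> (nat \<Rightarrow> 'v) \<Rightarrow> 'v \<Rightarrow> nat set" where
  "incident E src tgt v = {i \<in> E. src i = v \<or> tgt i = v}"

definition ramif :: "'v set \<Rightarrow> nat set \<Rightarrow> (nat \<Rightarrow> 'v) \<Rightarrow> (nat \<Rightarrow> 'v) \<Rightarrow> 'v set" where
  "ramif V E src tgt = {v \<in> V. card (incident E src tgt v) \<ge> 2}"

definition iota :: "(nat \<Rightarrow> 'v) \<Rightarrow> (nat \<Rightarrow> 'v) \<Rightarrow> 'v \<Rightarrow> nat \<Rightarrow> real" where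
  "iota src tgt v i = (if tgt i = v then 1 else if src i = v then -1 else 0)"

text \<open>eps v i = l i if pi_i(l i) = v and 0 if pi_i(0) = v; this is also the
  parameter value x_i = pi_i^{-1}(v) of the vertex v on edge i.\<close>
definition eps :: "(nat \<Rightarrow> 'v) \<Rightarrow> (nat \<Rightarrow> real) \<Rightarrow> 'v \<Rightarrow> nat \<Rightarrow> real" where
  "eps tgt l v i = (if tgt i = v then l i else 0)"

definition adj_rel :: "nat set \<Rightarrow> (nat \<Rightarrow> 'v) \<Rightarrow> (nat \<Rightarrow> 'v) \<Rightarrow> ('v \<times> 'v) set" where
  "adj_rel E src tgt = {(src i, tgt i) | i. i \<in> E} \<union> {(tgt i, src i) | i. i \<in> E}"

definition has_circuit :: "nat set \<Rightarrow> (nat \<Rightarrow> 'v) \<Rightarrow> (nat \<Rightarrow> 'v) \<Rightarrow> bool" where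
  "has_circuit E src tgt \<longleftrightarrow> (\<exists>es vs. es \<noteq> [] \<and> distinct es \<and> set es \<subseteq> E \<and>
     length vs = Suc (length es) \<and> vs ! 0 = vs ! length es \<and>
     (\<forall>k < length es. (src (es ! k) = vs ! k \<and> tgt (es ! k) = vs ! Suc k) \<or>
                       (tgt (es ! k) = vs ! k \<and> src (es ! k) = vs ! Suc k)))"

definition tree_network :: "'v set \<Rightarrow> nat set \<Rightarrow> (nat \<Rightarrow> 'v) \<Rightarrow> (nat \<Rightarrow> 'v) \<Rightarrow> (nat \<Rightarrow> real) \<Rightarrow> bool" where
  "tree_network V E src tgt l \<longleftrightarrow>
     V \<noteq> {} \<and> countable V \<and>
     (\<forall>i\<in>E. src i \<in> V \<and> tgt i \<in> V \<and> l i > 0) \<and>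
     (\<forall>i\<in>E. src i \<noteq> tgt i) \<and>
     (\<forall>i\<in>E. \<forall>j\<in>E. {src i, tgt i} = {src j, tgt j} \<longrightarrow> i = j) \<and>
     (\<forall>v\<in>V. finite (incident E src tgt v)) \<and>
     (\<forall>v\<in>V. \<forall>w\<in>V. (v, w) \<in> (adj_rel E src tgt)\<^sup>*) \<and>
     \<not> has_circuit E src tgt"

text \<open>Strong solution of (BBMG) with all d_i = 0. u i x t = u_i(x_i,t).
  ux, ut: first partial derivatives in x and t; utx, utxx: first and second
  x-derivatives of ut (one-sided at the boundary of e_i x [0,oo)).\<close>
definition strong_solution ::
  "'v set \<Rightarrow> nat set \<Rightarrow> (nat \<Rightarrow> 'v) \<Rightarrow> (nat \<Rightarrow> 'v) \<Rightarrow> (nat \<Rightarrow> real) \<Rightarrow>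
   (nat \<Rightarrow> real) \<Rightarrow> (nat \<Rightarrow> real) \<Rightarrow> (nat \<Rightarrow> real \<Rightarrow> real \<Rightarrow> real) \<Rightarrow> bool" where
  "strong_solution V E src tgt l a b u \<longleftrightarrow>
   (\<exists>ux ut utx utxx :: nat \<Rightarrow> real \<Rightarrow> real \<Rightarrow> real.
     (\<forall>i\<in>E.
        continuous_on ({0..l i} \<times> {0..}) (\<lambda>(x,t). u i x t) \<and>
        continuous_on ({0..l i} \<times> {0..}) (\<lambda>(x,t). ux i x t) \<and>
        continuous_on ({0..l i} \<times> {0..}) (\<lambda>(x,t). ut i x t) \<and>
        continuous_on ({0..l i} \<times> {0..}) (\<lambda>(x,t). utx i x t) \<and>
        continuous_on ({0..l i} \<times> {0..}) (\<lambda>(x,t). utxx i x t) \<and>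
        (\<forall>x\<in>{0..l i}. \<forall>t\<in>{0..}.
           ((\<lambda>y. u i y t) has_real_derivative ux i x t) (at x within {0..l i}) \<and>
           ((\<lambda>s. u i x s) has_real_derivative ut i x t) (at t within {0..}) \<and>
           ((\<lambda>y. ut i y t) has_real_derivative utx i x t) (at x within {0..l i}) \<and>
           ((\<lambda>y. utx i y t) has_real_derivative utxx i x t) (at x within {0..l i})) \<and>
        (\<forall>x\<in>{0..l i}. \<forall>t>0.
           ut i x t - a i * utxx i x t + b i * u i x t * ux i x t = 0)) \<and>
     (\<forall>v\<in>V. \<forall>t\<ge>0. \<forall>j\<in>incident E src tgt v. \<forall>h\<in>incident E src tgt v.
        u j (eps tgt l v j) t = u h (eps tgt l v h) t) \<and>
     (\<forall>v\<in>ramif V E src tgt. \<forall>t\<ge>0.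
        (\<Sum>j\<in>incident E src tgt v. iota src tgt v j * a j * ux j (eps tgt l v j) t) = 0))"

definition profile :: "real \<Rightarrow> real \<Rightarrow> real \<Rightarrow> real \<Rightarrow> real" where
  "profile a b c z = 6 * c / b * (1 / (1 + cosh (z / sqrt a)))"

end

theory Submission
  imports Defs
begin

definition gg :: "real \<Rightarrow> real" where "gg s = 1/(1+cosh s)"
definition g1 :: "real \<Rightarrow> real" where "g1 s = - sinh s/(1+cosh s)^2"
definition g2 :: "real \<Rightarrow> real" where "g2 s = (cosh s - 2)/(1+cosh s)^2"
definition g3 :: "real \<Rightarrow> real" where "g3 s = sinh s * (5 - cosh s)/(1+cosh s)^3"

lemma Dpos: "1 + cosh (s::real) > 0"
  using cosh_real_ge_1[of s] by linarith

lemma p42: "(E::real) \<noteq> 0 \<Longrightarrow> X * E^2 / E^4 = X / E^2"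
  by (simp add: eval_nat_numeral field_simps)
lemma p43: "(E::real) \<noteq> 0 \<Longrightarrow> X * E / E^4 = X / E^3"
  by (simp add: eval_nat_numeral field_simps)
lemma a1: fixes C S :: real assumes D: "0 < 1 + C" and sq: "C^2 = S^2 + 1"
  shows "(S * (2 * (S * (1 + C))) - C * (1 + C)^2) / (1 + C) ^ 4 = (C - 2) / (1 + C)^2"
proof -
  have e: "S * (2 * (S * (1 + C))) - C * (1 + C)^2 = (C - 2) * (1 + C)^2"
    using sq by (simp add: power2_eq_square algebra_simps)
  show ?thesis unfolding e using D p42[of "1+C" "C-2"] by simp
qed
lemma a2: fixes C S :: real assumes D: "0 < 1 + C"
  shows "(S * (1 + C)^2 - (C - 2) * (2 * (S * (1 + C)))) / (1 + C) ^ 4 = S * (5 - C) / (1 + C) ^ 3"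
proof -
  have e: "S * (1 + C)^2 - (C - 2) * (2 * (S * (1 + C))) = S * (5 - C) * (1+C)"
    by (simp add: power2_eq_square algebra_simps)
  show ?thesis unfolding e using D p43[of "1+C" "S * (5 - C)"] by simp
qed
lemma a3: fixes C S :: real assumes D: "0 < 1 + C"
  shows "- S/(1+C)^2 - S * (5 - C)/(1+C)^3 - 6 * (1/(1+C)) * (- S/(1+C)^2) = 0"
proof -
  obtain E where E: "E = 1 + C" by blast
  have Ep: "E > 0" using D E by simp
  have "- S/E^2 - S * (5 - C)/E^3 - 6 * (1/E) * (- S/E^2) = (- S*E - S * (5 - C) + 6*S)/E^3"
    using Ep by (simp add: field_simps power2_eq_square power3_eq_cube)
  also have "\<dots> = 0" using E by (simp add: algebra_simps)
  finally show ?thesis unfolding E[symmetric] .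
qed

lemma gg_deriv: "(gg has_real_derivative g1 s) (at s)"
  unfolding gg_def[abs_def] g1_def
  apply (rule derivative_eq_intros refl)+
  using Dpos[of s] apply simp
  using Dpos[of s] apply (simp add: power2_eq_square)
  done

lemma g1_deriv: "(g1 has_real_derivative g2 s) (at s)"
  unfolding g2_def g1_def[abs_def]
  apply (rule derivative_eq_intros refl)+
  using Dpos[of s] apply simp
  using Dpos[of s] cosh_square_eq[of s] apply (simp add: a1)
  done

lemma g2_deriv: "(g2 has_real_derivative g3 s) (at s)"
  unfolding g2_def[abs_def] g3_def
  apply (rule derivative_eq_intros refl)+
  using Dpos[of s] apply simp
  using Dpos[of s] apply (simp add: a2)
  done

lemma g_ident: "g1 s - g3 s - 6 * gg s * g1 s = 0"
  using a3[OF Dpos[of s], of "sinh s"] unfolding gg_def g1_def g3_def by simp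

lemma g3_cont: "isCont g3 s"
  unfolding g3_def[abs_def] using Dpos[of s]
  by (auto intro!: continuous_intros)

lemma cont_comp: assumes "\<And>s. isCont h s" "continuous_on S f"
  shows "continuous_on S (\<lambda>x. h (f x))"
  by (metis assms continuous_on_compose2 continuous_on_eq_continuous_at open_UNIV subset_UNIV)

lemma dx: assumes "Q \<noteq> 0" "\<And>s. (f has_real_derivative f' s) (at s)"
  shows "((\<lambda>y. K * f ((y - C*t + T)/Q)) has_real_derivative (K * (1/Q)) * f' ((x - C*t + T)/Q)) (at x)"
proof -
  have "((\<lambda>y. (y - C*t+T)/Q) has_real_derivative 1/Q) (at x)"
    using assms(1) by (auto intro!: derivative_eq_intros)
  from DERIV_cmult[OF DERIV_chain2[OF assms(2) this], of K] show ?thesis by (simp add: mult_ac)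
qed

lemma dt: assumes "Q \<noteq> 0" "\<And>s. (f has_real_derivative f' s) (at s)"
  shows "((\<lambda>y. K * f ((x - C*y + T)/Q)) has_real_derivative (K * (-C/Q)) * f' ((x - C*t + T)/Q)) (at t)"
proof -
  have "((\<lambda>y. (x - C*y+T)/Q) has_real_derivative -C/Q) (at t)"
    using assms(1) by (auto intro!: derivative_eq_intros)
  from DERIV_cmult[OF DERIV_chain2[OF assms(2) this], of K] show ?thesis by (simp add: mult_ac)
qed

lemma edge:
  fixes A B C T L :: real
  assumes Ap: "A > 0" and Bnz: "B \<noteq> 0"
  defines "K \<equiv> 6 * C / B" and "Q \<equiv> sqrt A"
  defines "u \<equiv> \<lambda>x t. K * gg ((x - C*t + T)/Q)"
    and "ux \<equiv> \<lambda>x t. (K * (1/Q)) * g1 ((x - C*t + T)/Q)"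
    and "ut \<equiv> \<lambda>x t. (K * (-C/Q)) * g1 ((x - C*t + T)/Q)"
    and "utx \<equiv> \<lambda>x t. (K * (-C/Q) * (1/Q)) * g2 ((x - C*t + T)/Q)"
    and "utxx \<equiv> \<lambda>x t. (K * (-C/Q) * (1/Q) * (1/Q)) * g3 ((x - C*t + T)/Q)"
  shows
   "continuous_on ({0..L} \<times> {0..}) (\<lambda>(x,t). u x t) \<and>
    continuous_on ({0..L} \<times> {0..}) (\<lambda>(x,t). ux x t) \<and>
    continuous_on ({0..L} \<times> {0..}) (\<lambda>(x,t). ut x t) \<and>
    continuous_on ({0..L} \<times> {0..}) (\<lambda>(x,t). utx x t) \<and>
    continuous_on ({0..L} \<times> {0..}) (\<lambda>(x,t). utxx x t) \<and>
    (\<forall>x\<in>{0..L}. \<forall>t\<in>{0..}.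
       ((\<lambda>y. u y t) has_real_derivative ux x t) (at x within {0..L}) \<and>
       ((\<lambda>s. u x s) has_real_derivative ut x t) (at t within {0..}) \<and>
       ((\<lambda>y. ut y t) has_real_derivative utx x t) (at x within {0..L}) \<and>
       ((\<lambda>y. utx y t) has_real_derivative utxx x t) (at x within {0..L})) \<and>
    (\<forall>x\<in>{0..L}. \<forall>t>0. ut x t - A * utxx x t + B * u x t * ux x t = 0)"
proof -
  have Qnz: "Q \<noteq> 0" unfolding Q_def using Ap by simp
  have cz: "continuous_on S (\<lambda>p::real\<times>real. (fst p - C * snd p + T)/Q)" for S
    using Qnz by (auto intro!: continuous_intros)
  have cg: "\<And>s. isCont gg s" "\<And>s. isCont g1 s" "\<And>s. isCont g2 s" "\<And>s. isCont g3 s"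
    using DERIV_isCont[OF gg_deriv] DERIV_isCont[OF g1_deriv] DERIV_isCont[OF g2_deriv] g3_cont
    by auto
  have C1: "continuous_on S (\<lambda>p. k * h ((fst p - C * snd p + T)/Q))" if "\<And>s. isCont h s" for h :: "real \<Rightarrow> real" and k :: real and S :: "(real \<times> real) set"
    by (rule continuous_on_mult_left, rule cont_comp[OF that cz])
  have cs: "(\<lambda>(x,t). f x t) = (\<lambda>p. f (fst p) (snd p))" for f :: "real \<Rightarrow> real \<Rightarrow> real"
    by auto
  have part1: "continuous_on ({0..L} \<times> {0..}) (\<lambda>(x,t). u x t) \<and>
    continuous_on ({0..L} \<times> {0..}) (\<lambda>(x,t). ux x t) \<and>
    continuous_on ({0..L} \<times> {0..}) (\<lambda>(x,t). ut x t) \<and>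
    continuous_on ({0..L} \<times> {0..}) (\<lambda>(x,t). utx x t) \<and>
    continuous_on ({0..L} \<times> {0..}) (\<lambda>(x,t). utxx x t)"
    unfolding cs u_def ux_def ut_def utx_def utxx_def by (intro conjI C1[OF cg(1)] C1[OF cg(2)] C1[OF cg(3)] C1[OF cg(4)])
  have part2: "((\<lambda>y. u y t) has_real_derivative ux x t) (at x within {0..L}) \<and>
       ((\<lambda>s. u x s) has_real_derivative ut x t) (at t within {0..}) \<and>
       ((\<lambda>y. ut y t) has_real_derivative utx x t) (at x within {0..L}) \<and>
       ((\<lambda>y. utx y t) has_real_derivative utxx x t) (at x within {0..L})" for x t
    unfolding u_def ux_def ut_def utx_def utxx_def
    by (intro conjI; rule has_field_derivative_at_within; intro dx[OF Qnz] dt[OF Qnz] gg_deriv g1_deriv g2_deriv)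
  have part3: "ut x t - A * utxx x t + B * u x t * ux x t = 0" for x t
  proof -
    define z where "z = (x - C*t + T)/Q"
    have Q1: "A * (1/Q) * (1/Q) = 1" unfolding Q_def using Ap by (simp add: field_simps)
    have BK: "B * K = 6 * C" unfolding K_def using Bnz by simp
    have "ut x t - A * utxx x t + B * u x t * ux x t =
        K * (-C/Q) * g1 z - (A * (1/Q) * (1/Q)) * (K * (-C/Q)) * g3 z + (B * K) * K * (1/Q) * gg z * g1 z"
      unfolding u_def ux_def ut_def utx_def utxx_def z_def by (simp add: algebra_simps)
    also have "\<dots> = - (K * C / Q) * (g1 z - g3 z - 6 * gg z * g1 z)"
      unfolding Q1 BK by (simp add: algebra_simps)
    also have "\<dots> = 0" using g_ident by simp
    finally show ?thesis .
  qed
  show ?thesis using part1 part2 part3 by blast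
qed

lemma profile_eq: "profile a b c z = 6 * c / b * gg (z / sqrt a)"
  by (simp add: profile_def gg_def)

lemma vert:
  fixes aj ah bj bh cj ch tj th ej eh t :: real
  assumes ap: "aj > 0" "ah > 0" and bh: "bh \<noteq> 0"
    and r: "sqrt (aj/ah) = bj/bh" and cj: "cj = sqrt (aj/ah) * ch"
    and tau: "(tj+ej)/sqrt aj = (th+eh)/sqrt ah"
  shows "6 * cj / bj = 6 * ch / bh" "(ej - cj*t + tj)/sqrt aj = (eh - ch*t + th)/sqrt ah"
    "sqrt aj = bj * sqrt ah / bh"
proof -
  have sa: "sqrt aj > 0" "sqrt ah > 0" using ap by auto
  define q where "q = sqrt aj / sqrt ah"
  have q0: "q > 0" unfolding q_def using sa by simp
  have rq: "sqrt (aj/ah) = q" unfolding q_def by (simp add: real_sqrt_divide)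
  have bj: "bj = q * bh" using r bh unfolding rq by (simp add: field_simps)
  have cj': "cj = q * ch" using cj rq by simp
  show "6 * cj / bj = 6 * ch / bh" unfolding bj cj' using q0 by simp
  have "cj / sqrt aj = ch / sqrt ah" unfolding cj' q_def using sa by simp
  then have "cj * t / sqrt aj = ch * t / sqrt ah" by (metis times_divide_eq_left mult.commute)
  then show "(ej - cj*t + tj)/sqrt aj = (eh - ch*t + th)/sqrt ah"
    using tau by (simp add: diff_divide_distrib add_divide_distrib algebra_simps)
  show "sqrt aj = bj * sqrt ah / bh" unfolding bj q_def using sa bh by simp
qed

theorem theorem6p1:
  fixes V :: "'v set" and E :: "nat set" and src tgt :: "nat \<Rightarrow> 'v"
    and l a b c \<tau> :: "nat \<Rightarrow> real"
  assumes tree: "tree_network V E src tgt l"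
    and e0: "0 \<in> E"
    and apos: "\<forall>i\<in>E. a i > 0"
    and bnz: "\<forall>i\<in>E. b i \<noteq> 0"
    and ab: "\<forall>v\<in>ramif V E src tgt. \<forall>i\<in>incident E src tgt v. \<forall>j\<in>incident E src tgt v.
               sqrt (a i / a j) = b i / b j \<and> b i / b j > 0"
    and bsum: "\<forall>v\<in>ramif V E src tgt. (\<Sum>i\<in>incident E src tgt v. iota src tgt v i * b i) = 0"
    and c0: "c 0 > 0"
    and cdef: "\<forall>v\<in>ramif V E src tgt. \<forall>i\<in>incident E src tgt v. \<forall>j\<in>incident E src tgt v.
               c i = sqrt (a i / a j) * c j"
    and tau0: "\<tau> 0 = 0"
    and taudef: "\<forall>v\<in>ramif V E src tgt. \<forall>i\<in>incident E src tgt v. \<forall>j\<in>incident E src tgt v.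
               (\<tau> i + eps tgt l v i) / sqrt (a i) = (\<tau> j + eps tgt l v j) / sqrt (a j)"
  shows "strong_solution V E src tgt l a b
           (\<lambda>i x t. profile (a i) (b i) (c i) (x - c i * t + \<tau> i))"
proof -
  have fin: "\<And>v. v \<in> V \<Longrightarrow> finite (incident E src tgt v)"
    using tree unfolding tree_network_def by blast
  have incE: "\<And>v. incident E src tgt v \<subseteq> E" by (auto simp: incident_def)
  have ramV: "\<And>v. v \<in> ramif V E src tgt \<Longrightarrow> v \<in> V \<and> card (incident E src tgt v) \<ge> 2"
    by (auto simp: ramif_def)
  define Z where "Z i x t = (x - c i * t + \<tau> i) / sqrt (a i)" for i x t
  have V1: "6 * c j / b j = 6 * c h / b h \<and> Z j (eps tgt l v j) t = Z h (eps tgt l v h) t \<and>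
      sqrt (a j) = b j * sqrt (a h) / b h"
    if v: "v \<in> ramif V E src tgt" and j: "j \<in> incident E src tgt v" and h: "h \<in> incident E src tgt v" for v j h t
  proof -
    have jE: "j \<in> E" and hE: "h \<in> E" using j h incE by auto
    note vv = vert[OF apos[rule_format, OF jE] apos[rule_format, OF hE] bnz[rule_format, OF hE]
        conjunct1[OF ab[rule_format, OF v j h]] cdef[rule_format, OF v j h] taudef[rule_format, OF v j h]]
    show ?thesis using vv unfolding Z_def by simp
  qed
  show ?thesis
    unfolding strong_solution_def profile_eq
  proof (intro exI conjI)
    show "\<forall>i\<in>E.
        continuous_on ({0..l i} \<times> {0..}) (\<lambda>(x,t). 6 * c i / b i * gg ((x - c i * t + \<tau> i) / sqrt (a i))) \<and>
        continuous_on ({0..l i} \<times> {0..}) (\<lambda>(x,t). (6 * c i / b i * (1 / sqrt (a i))) * g1 ((x - c i * t + \<tau> i) / sqrt (a i))) \<and>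
        continuous_on ({0..l i} \<times> {0..}) (\<lambda>(x,t). (6 * c i / b i * (- c i / sqrt (a i))) * g1 ((x - c i * t + \<tau> i) / sqrt (a i))) \<and>
        continuous_on ({0..l i} \<times> {0..}) (\<lambda>(x,t). (6 * c i / b i * (- c i / sqrt (a i)) * (1 / sqrt (a i))) * g2 ((x - c i * t + \<tau> i) / sqrt (a i))) \<and>
        continuous_on ({0..l i} \<times> {0..}) (\<lambda>(x,t). (6 * c i / b i * (- c i / sqrt (a i)) * (1 / sqrt (a i)) * (1 / sqrt (a i))) * g3 ((x - c i * t + \<tau> i) / sqrt (a i))) \<and>
        (\<forall>x\<in>{0..l i}. \<forall>t\<in>{0..}.
           ((\<lambda>y. 6 * c i / b i * gg ((y - c i * t + \<tau> i) / sqrt (a i))) has_real_derivative (6 * c i / b i * (1 / sqrt (a i))) * g1 ((x - c i * t + \<tau> i) / sqrt (a i))) (at x within {0..l i}) \<and>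
           ((\<lambda>s. 6 * c i / b i * gg ((x - c i * s + \<tau> i) / sqrt (a i))) has_real_derivative (6 * c i / b i * (- c i / sqrt (a i))) * g1 ((x - c i * t + \<tau> i) / sqrt (a i))) (at t within {0..}) \<and>
           ((\<lambda>y. (6 * c i / b i * (- c i / sqrt (a i))) * g1 ((y - c i * t + \<tau> i) / sqrt (a i))) has_real_derivative (6 * c i / b i * (- c i / sqrt (a i)) * (1 / sqrt (a i))) * g2 ((x - c i * t + \<tau> i) / sqrt (a i))) (at x within {0..l i}) \<and>
           ((\<lambda>y. (6 * c i / b i * (- c i / sqrt (a i)) * (1 / sqrt (a i))) * g2 ((y - c i * t + \<tau> i) / sqrt (a i))) has_real_derivative (6 * c i / b i * (- c i / sqrt (a i)) * (1 / sqrt (a i)) * (1 / sqrt (a i))) * g3 ((x - c i * t + \<tau> i) / sqrt (a i))) (at x within {0..l i})) \<and>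
        (\<forall>x\<in>{0..l i}. \<forall>t>0.
           (6 * c i / b i * (- c i / sqrt (a i))) * g1 ((x - c i * t + \<tau> i) / sqrt (a i))
           - a i * ((6 * c i / b i * (- c i / sqrt (a i)) * (1 / sqrt (a i)) * (1 / sqrt (a i))) * g3 ((x - c i * t + \<tau> i) / sqrt (a i)))
           + b i * (6 * c i / b i * gg ((x - c i * t + \<tau> i) / sqrt (a i))) * ((6 * c i / b i * (1 / sqrt (a i))) * g1 ((x - c i * t + \<tau> i) / sqrt (a i))) = 0)"
      (is "\<forall>i\<in>E. ?P i")
    proof
      fix i assume i: "i \<in> E"
      show "?P i" using edge[OF apos[rule_format, OF i] bnz[rule_format, OF i], where C="c i" and T="\<tau> i" and L="l i"] by simp
    qed
  next
    show "\<forall>v\<in>V. \<forall>t\<ge>0. \<forall>j\<in>incident E src tgt v. \<forall>h\<in>incident E src tgt v.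
        6 * c j / b j * gg ((eps tgt l v j - c j * t + \<tau> j) / sqrt (a j)) =
        6 * c h / b h * gg ((eps tgt l v h - c h * t + \<tau> h) / sqrt (a h))"
    proof (intro ballI allI impI)
      fix v t j h assume v: "v \<in> V" and j: "j \<in> incident E src tgt v" and h: "h \<in> incident E src tgt v"
      show "6 * c j / b j * gg ((eps tgt l v j - c j * t + \<tau> j) / sqrt (a j)) =
        6 * c h / b h * gg ((eps tgt l v h - c h * t + \<tau> h) / sqrt (a h))"
      proof (cases "v \<in> ramif V E src tgt")
        case True
        from V1[OF True j h, of t] have "6 * c j / b j = 6 * c h / b h"
          "(eps tgt l v j - c j * t + \<tau> j) / sqrt (a j) = (eps tgt l v h - c h * t + \<tau> h) / sqrt (a h)"
          unfolding Z_def by auto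
        then show ?thesis by (simp only:)
      next
        case False
        then have "card (incident E src tgt v) \<le> Suc 0" using v by (auto simp: ramif_def)
        then have "j = h" using card_le_Suc0_iff_eq[OF fin[OF v]] j h by blast
        then show ?thesis by simp
      qed
    qed
  next
    show "\<forall>v\<in>ramif V E src tgt. \<forall>t\<ge>0.
        (\<Sum>j\<in>incident E src tgt v. iota src tgt v j * a j *
           ((6 * c j / b j * (1 / sqrt (a j))) * g1 ((eps tgt l v j - c j * t + \<tau> j) / sqrt (a j)))) = 0"
    proof (intro ballI allI impI)
      fix v t assume v: "v \<in> ramif V E src tgt"
      have "incident E src tgt v \<noteq> {}" using ramV[OF v] by (metis card.empty not_numeral_le_zero)
      then obtain h where h: "h \<in> incident E src tgt v" by blast
      have hE: "h \<in> E" using h incE by auto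
      define M where "M = sqrt (a h) / b h * (6 * c h / b h) * g1 (Z h (eps tgt l v h) t)"
      have T: "iota src tgt v j * a j * ((6 * c j / b j * (1 / sqrt (a j))) * g1 ((eps tgt l v j - c j * t + \<tau> j) / sqrt (a j)))
          = iota src tgt v j * b j * M" if j: "j \<in> incident E src tgt v" for j
      proof -
        have jE: "j \<in> E" using j incE by auto
        have aj: "a j > 0" using apos jE by auto
        have as: "a j * (1 / sqrt (a j)) = sqrt (a j)" using aj
          by (metis real_div_sqrt less_imp_le times_divide_eq_right mult_1_right)
        from V1[OF v j h, of t] have e1: "6 * c j / b j = 6 * c h / b h"
          and e2: "(eps tgt l v j - c j * t + \<tau> j) / sqrt (a j) = Z h (eps tgt l v h) t"
          and e3: "sqrt (a j) = b j * sqrt (a h) / b h" unfolding Z_def by auto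
        have "iota src tgt v j * a j * ((6 * c j / b j * (1 / sqrt (a j))) * g1 ((eps tgt l v j - c j * t + \<tau> j) / sqrt (a j)))
           = iota src tgt v j * (a j * (1 / sqrt (a j))) * (6 * c h / b h) * g1 (Z h (eps tgt l v h) t)"
          unfolding e1 e2 by (simp add: mult_ac)
        also have "\<dots> = iota src tgt v j * sqrt (a j) * (6 * c h / b h) * g1 (Z h (eps tgt l v h) t)"
          by (simp only: as)
        also have "\<dots> = iota src tgt v j * (b j * sqrt (a h) / b h) * (6 * c h / b h) * g1 (Z h (eps tgt l v h) t)"
          by (simp only: e3)
        also have "\<dots> = iota src tgt v j * b j * M" unfolding M_def by (simp add: mult_ac)
        finally show ?thesis .
      qed
      have "(\<Sum>j\<in>incident E src tgt v. iota src tgt v j * a j *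
           ((6 * c j / b j * (1 / sqrt (a j))) * g1 ((eps tgt l v j - c j * t + \<tau> j) / sqrt (a j))))
         = (\<Sum>j\<in>incident E src tgt v. iota src tgt v j * b j) * M"
        using T by (simp add: sum_distrib_right)
      also have "\<dots> = 0" using bsum v by simp
      finally show "(\<Sum>j\<in>incident E src tgt v. iota src tgt v j * a j *
           ((6 * c j / b j * (1 / sqrt (a j))) * g1 ((eps tgt l v j - c j * t + \<tau> j) / sqrt (a j)))) = 0" .
    qed
  qed
qed

end
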